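(* Let $K\ge 1$ be an integer, $T\ge 1$, and $\eta\in(0,1/2]$. Let $f^1,\dots,f^T$ be classifiers (e.g. the iterates produced by the worst-class adversarial training algorithm described in the context), and for each $k\in\{0,1,\dots,K\}$ and $t\in\{1,\dots,T\}$ let $L^{val}_k(f^t)\in[0,1]$. Define the weights $$w^{t}_{k}=\frac{\exp\left(\sum_{i=1}^{t-1}\eta\, L^{val}_{k}(f^i)\right)}{\sum_{j=0}^{K}\exp\left(\sum_{i=1}^{t-1}\eta\, L^{val}_{j}(f^i)\right)},\qquad k=0,\dots,K,\ t=1,\dots,T$$ (so $w^1_k=1/(K+1)$). Assume that for every $k\in\{0,\dots,K\}$, $$\frac{1}{T}\sum_{t=1}^{T}L^{val}_{k}(f^{t})\ \ge\ \frac{1}{1-\eta}\min_{1\le t\le T}L^{val}_{k}(f^{t}).$$ Then $$\max_{0\le k\le K}\ \min_{1\le t\le T}L^{val}_{k}(f^{t})\ \le\ \frac{1}{T}\sum_{t=1}^{T}\sum_{k=0}^{K}w^{t}_{k}\,L^{val}_{k}(f^{t})+\frac{\log(K+1)}{T\eta}.$$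
   Context: Setting: $K$-class classification with labels $\{1,\dots,K\}$. For a classifier $f$, $L^{val}_0(f)$ denotes its average loss on a validation set and $L^{val}_k(f)$ ($1\le k\le K$) its average loss on the validation examples of class $k$ (the loss used is the TRADES adversarial loss). The worst-class adversarial training algorithm initializes $f^0$ and, for $t=1,\dots,T$, sets $f^t=f^{t-1}-\lambda\sum_{k=0}^K w^t_k\,\partial L^{tr}_k(f^{t-1})/\partial f$, where $L^{tr}_0$ is the overall training loss and $L^{tr}_k$ the class-$k$ training loss, $\lambda>0$ a learning rate, and $w^t_k$ are the exponential (Hedge) weights given in the claim, computed from past validation losses. *)

theory Defs
  imports Complex_Main
begin

text \<open>L k t stands for the validation loss L^val_k(f^t) of the t-th iterate on
class k (k = 0 is the overall loss). Hedge weights w^t_k.\<close>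

definition hedge_weight :: "real \<Rightarrow> nat \<Rightarrow> (nat \<Rightarrow> nat \<Rightarrow> real) \<Rightarrow> nat \<Rightarrow> nat \<Rightarrow> real" where
  "hedge_weight \<eta> K L t k =
     exp (\<Sum>i=1..<t. \<eta> * L k i) / (\<Sum>j=0..K. exp (\<Sum>i=1..<t. \<eta> * L j i))"

end

theory Submission
  imports Defs
begin

theorem theorem1:
  fixes K T :: nat and \<eta> :: real and L :: "nat \<Rightarrow> nat \<Rightarrow> real"
  assumes K: "K \<ge> 1" and T: "T \<ge> 1"
    and eta: "0 < \<eta>" "\<eta> \<le> 1/2"
    and range: "\<And>k t. k \<le> K \<Longrightarrow> 1 \<le> t \<Longrightarrow> t \<le> T \<Longrightarrow> L k t \<in> {0..1}"
    and hyp: "\<And>k. k \<le> K \<Longrightarrow>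
       (1 / real T) * (\<Sum>t=1..T. L k t) \<ge> (1 / (1 - \<eta>)) * (MIN t\<in>{1..T}. L k t)"
  shows "(MAX k\<in>{0..K}. MIN t\<in>{1..T}. L k t)
     \<le> (1 / real T) * (\<Sum>t=1..T. \<Sum>k=0..K. hedge_weight \<eta> K L t k * L k t)
       + ln (real K + 1) / (real T * \<eta>)"
proof -
  define E where "E j t = exp (\<Sum>i=1..<t. \<eta> * L j i)" for j t
  define W where "W t = (\<Sum>j=0..K. E j t)" for t
  define g where "g t = (\<Sum>k=0..K. hedge_weight \<eta> K L t k * L k t)" for t
  define c where "c = \<eta> + \<eta>^2"
  define G where "G = (\<Sum>t=1..T. g t)"
  have Epos: "E j t > 0" for j t by (simp add: E_def)
  have Wpos: "W t > 0" for t unfolding W_def by (intro sum_pos) (auto simp: Epos)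
  have hw: "hedge_weight \<eta> K L t k = E k t / W t" for t k
    by (simp add: hedge_weight_def E_def W_def)
  have gnn: "g t \<ge> 0" if "1 \<le> t" "t \<le> T" for t
    unfolding g_def hw using range that Epos Wpos
  proof (intro sum_nonneg)
    fix k assume "k \<in> {0..K}"
    then have "0 \<le> L k t" using range that by auto
    then show "0 \<le> E k t / W t * L k t" using Epos[of k t] Wpos[of t] by simp
  qed
  have Gnn: "G \<ge> 0" unfolding G_def using gnn by (intro sum_nonneg) auto
  have step: "W (Suc t) \<le> W t * exp (c * g t)" if t1: "1 \<le> t" "t \<le> T" for t
  proof -
    have "E k (Suc t) \<le> E k t * (1 + c * L k t)" if k: "k \<le> K" for k
    proof -
      have x: "0 \<le> L k t" "L k t \<le> 1" using range[OF k t1] by auto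
      have "E k (Suc t) = E k t * exp (\<eta> * L k t)"
        using t1 by (simp add: E_def sum.atLeastLessThan_Suc exp_add)
      also have "exp (\<eta> * L k t) \<le> 1 + \<eta> * L k t + (\<eta> * L k t)^2"
        using x eta by (intro exp_bound) (auto intro: mult_le_one)
      also have "(\<eta> * L k t)^2 \<le> \<eta>^2 * L k t"
      proof -
        have "L k t * L k t \<le> L k t" using x by (simp add: mult_left_le_one_le)
        hence "\<eta>^2 * (L k t * L k t) \<le> \<eta>^2 * L k t" by (intro mult_left_mono) auto
        thus ?thesis by (simp add: power_mult_distrib power2_eq_square algebra_simps)
      qed
      finally show ?thesis using Epos[of k t] unfolding c_def
        by (simp add: algebra_simps)
    qed
    hence "W (Suc t) \<le> (\<Sum>k=0..K. E k t * (1 + c * L k t))"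
      unfolding W_def by (intro sum_mono) auto
    also have "\<dots> = W t + c * (\<Sum>k=0..K. E k t * L k t)"
      by (simp add: W_def algebra_simps sum.distrib sum_distrib_left)
    also have "(\<Sum>k=0..K. E k t * L k t) = W t * g t"
      unfolding g_def hw sum_distrib_left using Wpos[of t]
      by (intro sum.cong) auto
    also have "W t + c * (W t * g t) = W t * (1 + c * g t)" by (simp add: algebra_simps)
    also have "\<dots> \<le> W t * exp (c * g t)"
      using Wpos[of t] by (intro mult_left_mono) (auto intro: exp_ge_add_one_self)
    finally show ?thesis .
  qed
  have W1: "W 1 = real K + 1" by (simp add: W_def E_def)
  have bound: "n \<le> T \<Longrightarrow> W (Suc n) \<le> (real K + 1) * exp (c * (\<Sum>t=1..n. g t))" for n
  proof (induction n)
    case 0 then show ?case using W1 by simp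
  next
    case (Suc n)
    have "W (Suc (Suc n)) \<le> W (Suc n) * exp (c * g (Suc n))"
      using step[of "Suc n"] Suc.prems by simp
    also have "\<dots> \<le> (real K + 1) * exp (c * (\<Sum>t=1..n. g t)) * exp (c * g (Suc n))"
      using Suc by (intro mult_right_mono) auto
    also have "\<dots> = (real K + 1) * exp (c * (\<Sum>t=1..Suc n. g t))"
      by (simp add: algebra_simps exp_add[symmetric])
    finally show ?case .
  qed
  have WT: "W (Suc T) \<le> (real K + 1) * exp (c * G)" using bound[of T] by (simp add: G_def)
  have each: "(MIN t\<in>{1..T}. L k t) \<le> (1 / real T) * G + ln (real K + 1) / (real T * \<eta>)"
    if k: "k \<le> K" for k
  proof -
    define S where "S = (\<Sum>t=1..T. L k t)"
    have "E k (Suc T) \<le> W (Suc T)" unfolding W_def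
      using k Epos by (intro member_le_sum) (auto intro: less_imp_le)
    also note WT
    finally have "exp (\<eta> * S) \<le> (real K + 1) * exp (c * G)"
      by (simp add: E_def S_def sum_distrib_left atLeastLessThanSuc_atLeastAtMost)
    hence "ln (exp (\<eta> * S)) \<le> ln ((real K + 1) * exp (c * G))"
      by (subst ln_le_cancel_iff) auto
    hence hS: "\<eta> * S \<le> ln (real K + 1) + c * G" by (simp add: ln_mult)
    have hm: "(MIN t\<in>{1..T}. L k t) \<le> (1 - \<eta>) * S / real T"
      using hyp[OF k] eta T unfolding S_def by (simp add: field_simps)
    have lnn: "ln (real K + 1) \<ge> 0" by simp
    have "(1 - \<eta>) * S / real T \<le> (1 - \<eta>) * ((ln (real K + 1) + c * G) / \<eta>) / real T"
      using hS eta T by (intro divide_right_mono mult_left_mono) (auto simp: field_simps)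
    also have "\<dots> = ((1 - \<eta>) * ln (real K + 1) / \<eta> + (1 - \<eta>) * (1 + \<eta>) * G) / real T"
      using eta by (simp add: c_def field_simps power2_eq_square)
    also have "\<dots> \<le> (ln (real K + 1) / \<eta> + G) / real T"
    proof -
      have "(1 - \<eta>) * ln (real K + 1) / \<eta> \<le> ln (real K + 1) / \<eta>"
        using eta lnn by (intro divide_right_mono) (auto simp: mult_left_le_one_le)
      moreover have "(1 - \<eta>) * (1 + \<eta>) * G \<le> G"
        using eta Gnn mult_le_one[of \<eta> \<eta>] by (intro mult_left_le_one_le) (auto simp: algebra_simps power2_eq_square)
      ultimately show ?thesis using T by (intro divide_right_mono) auto
    qed
    also have "\<dots> = (1 / real T) * G + ln (real K + 1) / (real T * \<eta>)"
      by (simp add: add_divide_distrib mult.commute)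
    finally show ?thesis using hm by linarith
  qed
  show ?thesis unfolding G_def[symmetric] g_def[symmetric]
    using each by (subst Max_le_iff) auto
qed

end
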